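(* Consider Method 1.3 (described in the context) for finding $p^*=\Pr(y,D)$, the Euclidean projection of a given point $y\in\mathbb{R}^n$ onto $D$. Suppose the method does not terminate. Then every limit point of the sequence $\{p_k\}_{k\in K}$ equals $p^*$; and if $\|p_{k+1}-y\|\ge\|p_k-y\|$ for all $k\in K$, then $p_k\to p^*$.
   Context: Setting: $D''\subset\mathbb{R}^n$ closed convex; $f_j$, $j\in J=\{1,\dots,m\}$, convex on $\mathbb{R}^n$ with $D_j=\{x:f_j(x)\le0\}$ having nonempty interior; $D'=\{x:f_j(x)\le0\ \forall j\}$; $D=D'\cap D''\ne\emptyset$. Notation: $K=\{0,1,\dots\}$, $F=\max_jf_j$, $D'_\varepsilon=\{x:F(x)\le\varepsilon\}$, $\Pr(y,S)$ is the projection of $y$ onto the closed convex set $S$, $W^1(x,D_j)=\{a:\|a\|=1,\ \langle a,z-x\rangle\le0\ \forall z\in D_j\}$. Method 1.3: choose $v^j\in\operatorname{int}D_j$, a sequence $\varepsilon_k>0$ with $\varepsilon_k\to0$, and a constant $q\ge1$; set $k=i=0$, $M_0=\mathbb{R}^n$, $y_0=\Pr(y,D'')$. Step 1: $J_i=\{j:y_i\notin D_j\}$; if empty, stop. Step 2: if $y_i\notin D'_{\varepsilon_k}$ set $Q_i=M_i$; otherwise set $i_k=i$, $p_k=y_{i_k}$, $Q_i=\mathbb{R}^n$, $k\leftarrow k+1$. Step 3: for $j\in J_i$ choose $z_i^j\in(v^j,y_i)$ with $z_i^j\notin\operatorname{int}D_j$ and $y_i+q_i^j(z_i^j-y_i)\in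 D_j$ for some $q_i^j\in[1,q]$; for $j\notin J_i$, $z_i^j=y_i$. Step 4: find $j_i\in J_i$ with $\|y_i-z_i^{j_i}\|=\max_{j\in J_i}\|y_i-z_i^j\|$. Step 5: choose $a_i\in W^1(z_i^{j_i},D_{j_i})$ and set $M_{i+1}=Q_i\cap\{x:\langle a_i,x-z_i^{j_i}\rangle\le0\}$. Step 6: $y_{i+1}=\Pr(y,M_{i+1}\cap D'')$; $i\leftarrow i+1$; go to Step 1. *)

theory Defs
  imports "HOL-Analysis.Analysis"
begin

text \<open>Index set J = {0..<m} (the paper's {1..m} shifted). D_j = {x. f_j x \<le> 0}.\<close>

definition Dj :: "(nat \<Rightarrow> 'a \<Rightarrow> real) \<Rightarrow> nat \<Rightarrow> 'a set" where
  "Dj f j = {x. f j x \<le> 0}"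

text \<open>D'_eps = {x. F x \<le> eps} with F = max_j f_j, i.e. f_j x \<le> eps for all j in J.\<close>
definition Deps :: "nat \<Rightarrow> (nat \<Rightarrow> 'a \<Rightarrow> real) \<Rightarrow> real \<Rightarrow> 'a set" where
  "Deps m f e = {x. \<forall>j<m. f j x \<le> e}"

text \<open>A non-terminating run of Method 1.3. Iteration i has current point ys i, set M i,
  set Q i, points z i j, chosen index jj i, normal a i; kk i is the value of the counter k
  when iteration i reaches Step 2 (kk (Suc i) = Suc (kk i) exactly when Step 2 takes the
  second branch, i.e. i = i_{kk i}). Non-termination: J_i is nonempty for every i.\<close>
definition method13_run ::
  "nat \<Rightarrow> (nat \<Rightarrow> 'a::euclidean_space \<Rightarrow> real) \<Rightarrow> 'a set \<Rightarrow> 'a \<Rightarrow> (nat \<Rightarrow> 'a)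
   \<Rightarrow> (nat \<Rightarrow> real) \<Rightarrow> real
   \<Rightarrow> (nat \<Rightarrow> 'a) \<Rightarrow> (nat \<Rightarrow> 'a set) \<Rightarrow> (nat \<Rightarrow> 'a set) \<Rightarrow> (nat \<Rightarrow> nat \<Rightarrow> 'a)
   \<Rightarrow> (nat \<Rightarrow> nat) \<Rightarrow> (nat \<Rightarrow> 'a) \<Rightarrow> (nat \<Rightarrow> nat) \<Rightarrow> bool" where
  "method13_run m f D2 y v eps q ys M Q z jj a kk \<longleftrightarrow>
     (\<forall>j<m. v j \<in> interior (Dj f j)) \<and>
     (\<forall>k. eps k > 0) \<and> eps \<longlonglongrightarrow> 0 \<and> q \<ge> 1 \<and>
     kk 0 = 0 \<and> M 0 = UNIV \<and> ys 0 = closest_point D2 y \<and>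
     (\<forall>i.
        \<comment> \<open>Step 1: J_i nonempty (the method does not stop)\<close>
        (\<exists>j<m. ys i \<notin> Dj f j) \<and>
        \<comment> \<open>Step 2\<close>
        (ys i \<notin> Deps m f (eps (kk i)) \<longrightarrow> Q i = M i \<and> kk (Suc i) = kk i) \<and>
        (ys i \<in> Deps m f (eps (kk i)) \<longrightarrow> Q i = UNIV \<and> kk (Suc i) = Suc (kk i)) \<and>
        \<comment> \<open>Step 3\<close>
        (\<forall>j<m. ys i \<notin> Dj f j \<longrightarrow>
            z i j \<in> open_segment (v j) (ys i) \<and> z i j \<notin> interior (Dj f j) \<and>
            (\<exists>qq. 1 \<le> qq \<and> qq \<le> q \<and> ys i + qq *\<^sub>R (z i j - ys i) \<in> Dj f j)) \<and>
        (\<forall>j<m. ys i \<in> Dj f j \<longrightarrow> z i j = ys i) \<and>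
        \<comment> \<open>Step 4\<close>
        jj i < m \<and> ys i \<notin> Dj f (jj i) \<and>
        (\<forall>j<m. ys i \<notin> Dj f j \<longrightarrow> norm (ys i - z i j) \<le> norm (ys i - z i (jj i))) \<and>
        \<comment> \<open>Step 5\<close>
        norm (a i) = 1 \<and> (\<forall>x\<in>Dj f (jj i). inner (a i) (x - z i (jj i)) \<le> 0) \<and>
        M (Suc i) = Q i \<inter> {x. inner (a i) (x - z i (jj i)) \<le> 0} \<and>
        \<comment> \<open>Step 6\<close>
        ys (Suc i) = closest_point (M (Suc i) \<inter> D2) y)"

text \<open>i_k: the iteration at which the counter moves from k to k+1; p_k = y_{i_k}.\<close>
definition method13_p :: "(nat \<Rightarrow> 'a) \<Rightarrow> (nat \<Rightarrow> nat) \<Rightarrow> nat \<Rightarrow> 'a" where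
  "method13_p ys kk k = ys (LEAST i. kk i = k \<and> kk (Suc i) = Suc k)"

end

theory Submission imports Defs begin

lemma cut_bound:
  fixes a v w zz :: "'a::euclidean_space"
  assumes na: "norm a = 1" and dp: "\<delta> > 0" and bS: "ball v \<delta> \<subseteq> S"
    and hs: "\<forall>x\<in>S. inner a (x - zz) \<le> 0" and zs: "zz \<in> open_segment v w"
  shows "\<delta> * norm (w - zz) \<le> 2 * norm (w - v) * inner a (w - zz) \<and> 0 \<le> inner a (w - zz)"
proof -
  obtain t where t: "0 < t" "t < 1" "zz = (1 - t) *\<^sub>R v + t *\<^sub>R w"
    using zs unfolding in_segment by auto
  have "v + (\<delta>/2) *\<^sub>R a \<in> ball v \<delta>" using dp na by (simp add: dist_norm)
  then have "inner a (v + (\<delta>/2) *\<^sub>R a - zz) \<le> 0" using hs bS by blast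
  moreover have "v + (\<delta>/2) *\<^sub>R a - zz = (\<delta>/2) *\<^sub>R a - t *\<^sub>R (w - v)"
    using t(3) by (simp add: algebra_simps)
  ultimately have "\<delta>/2 * inner a a - t * inner a (w - v) \<le> 0"
    by (simp add: inner_diff_right)
  moreover have "inner a a = 1" using na by (metis norm_eq_1)
  ultimately have h1: "\<delta>/2 \<le> t * inner a (w - v)" by simp
  have pos: "inner a (w - v) > 0"
    proof -
    have "0 < t * inner a (w - v)" using h1 dp by linarith
    then show ?thesis using t(1) by (simp add: zero_less_mult_iff)
  qed
  have h2: "\<delta> \<le> 2 * inner a (w - v)"
  proof -
    have "t * inner a (w - v) \<le> 1 * inner a (w - v)"
      using t pos by (intro mult_right_mono) auto
    then show ?thesis using h1 by linarith
  qed
  have wz: "w - zz = (1 - t) *\<^sub>R (w - v)" using t(3) by (simp add: algebra_simps)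
  have "\<delta> * norm (w - zz) = (1 - t) * (\<delta> * norm (w - v))"
    using wz t by simp
  also have "\<dots> \<le> (1 - t) * (2 * inner a (w - v) * norm (w - v))"
    using h2 t by (intro mult_left_mono mult_right_mono) auto
  also have "\<dots> = 2 * norm (w - v) * inner a (w - zz)"
    unfolding wz by (simp add: algebra_simps)
  finally show ?thesis using wz pos t by simp
qed

lemma nested_proj:
  fixes y :: "'a::euclidean_space"
  assumes "convex S" "closed S" "S' \<subseteq> S" "closed S'" "S' \<noteq> {}"
  shows "(norm (closest_point S' y - closest_point S y))\<^sup>2
         \<le> (norm (closest_point S' y - y))\<^sup>2 - (norm (closest_point S y - y))\<^sup>2"
proof -
  let ?p = "closest_point S y" and ?p' = "closest_point S' y"
  have "?p' \<in> S" using closest_point_in_set[OF assms(4,5)] assms(3) by blast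
  then have d: "inner (y - ?p) (?p' - ?p) \<le> 0" using closest_point_dot[OF assms(1,2)] by blast
  have "?p' - y = (?p' - ?p) - (y - ?p)" by simp
  then have "(norm (?p' - y))\<^sup>2 = (norm (?p' - ?p))\<^sup>2 - 2 * inner (y - ?p) (?p' - ?p) + (norm (y - ?p))\<^sup>2"
    unfolding power2_norm_eq_inner by (simp add: inner_diff_left inner_diff_right inner_commute)
  moreover have "norm (y - ?p) = norm (?p - y)" by (rule norm_minus_commute)
  ultimately show ?thesis using d by simp
qed


context
  fixes f :: "nat \<Rightarrow> 'a::euclidean_space \<Rightarrow> real"
    and D2 :: "'a set" and y :: 'a and m v eps q ys M Q z jj a kk
  assumes cD2: "closed D2" and vD2: "convex D2"
    and cvx: "\<forall>j<m. convex_on UNIV (f j)"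
    and intne: "\<forall>j<m. interior (Dj f j) \<noteq> {}"
    and Dne: "Deps m f 0 \<inter> D2 \<noteq> {}"
    and run: "method13_run m f D2 y v eps q ys M Q z jj a kk"
begin

lemma R_v: "j < m \<Longrightarrow> v j \<in> interior (Dj f j)"
  using run unfolding method13_run_def by blast
lemma R_eps: "eps k > 0" "eps \<longlonglongrightarrow> 0" "q \<ge> 1"
  using run unfolding method13_run_def by blast+
lemma R_init: "kk 0 = 0" "M 0 = UNIV" "ys 0 = closest_point D2 y"
  using run unfolding method13_run_def by blast+
lemma R_J: "\<exists>j<m. ys i \<notin> Dj f j"
  using run unfolding method13_run_def by blast
lemma R_2a: "ys i \<notin> Deps m f (eps (kk i)) \<Longrightarrow> Q i = M i \<and> kk (Suc i) = kk i"
  using run unfolding method13_run_def by blast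
lemma R_2b: "ys i \<in> Deps m f (eps (kk i)) \<Longrightarrow> Q i = UNIV \<and> kk (Suc i) = Suc (kk i)"
  using run unfolding method13_run_def by blast
lemma R_3: "j < m \<Longrightarrow> ys i \<notin> Dj f j \<Longrightarrow> z i j \<in> open_segment (v j) (ys i) \<and>
            (\<exists>qq. 1 \<le> qq \<and> qq \<le> q \<and> ys i + qq *\<^sub>R (z i j - ys i) \<in> Dj f j)"
  using run unfolding method13_run_def by blast
lemma R_4: "jj i < m" "ys i \<notin> Dj f (jj i)"
  "j < m \<Longrightarrow> ys i \<notin> Dj f j \<Longrightarrow> norm (ys i - z i j) \<le> norm (ys i - z i (jj i))"
  using run unfolding method13_run_def by blast+
lemma R_5: "norm (a i) = 1" "x \<in> Dj f (jj i) \<Longrightarrow> inner (a i) (x - z i (jj i)) \<le> 0"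
  "M (Suc i) = Q i \<inter> {x. inner (a i) (x - z i (jj i)) \<le> 0}"
  "ys (Suc i) = closest_point (M (Suc i) \<inter> D2) y"
  using run unfolding method13_run_def by blast+

lemma mpos: "m > 0" using R_4(1)[of 0] by simp

lemma contf: "j < m \<Longrightarrow> continuous_on UNIV (f j)"
  using cvx convex_on_continuous[OF open_UNIV] by blast

lemma closed_Dj: "j < m \<Longrightarrow> closed (Dj f j)"
  unfolding Dj_def using contf by (intro closed_Collect_le continuous_on_const) auto

lemma Deps0: "Deps m f 0 = (\<Inter>j\<in>{..<m}. Dj f j)"
  unfolding Deps_def Dj_def using mpos by auto

lemma closed_DD: "closed (Deps m f 0 \<inter> D2)"
  unfolding Deps0 using closed_Dj cD2 by auto

lemma convex_Dj: "j < m \<Longrightarrow> convex (Dj f j)"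
proof -
  assume j: "j < m"
  show ?thesis unfolding Dj_def convex_alt
  proof (intro allI impI ballI, clarsimp)
    fix x1 x2 :: 'a and u :: real
    assume h: "f j x1 \<le> 0" "f j x2 \<le> 0" "0 \<le> u" "u \<le> 1"
    have "f j ((1 - u) *\<^sub>R x1 + u *\<^sub>R x2) \<le> (1 - u) * f j x1 + u * f j x2"
      using convex_onD[of UNIV "f j"] cvx j h by auto
    also have "\<dots> \<le> 0" using h by (simp add: mult_nonneg_nonpos add_nonpos_nonpos)
    finally show "f j ((1 - u) *\<^sub>R x1 + u *\<^sub>R x2) \<le> 0" .
  qed
qed

lemma convex_DD: "convex (Deps m f 0 \<inter> D2)"
  unfolding Deps0 using convex_Dj vD2 by (auto intro!: convex_INT convex_Int)

lemma M_props: "Deps m f 0 \<inter> D2 \<subseteq> M i \<and> closed (M i) \<and> convex (M i)"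
proof (induction i)
  case 0 then show ?case using R_init by auto
next
  case (Suc i)
  have hs: "{x. inner (a i) (x - z i (jj i)) \<le> 0} = {x. inner (a i) x \<le> inner (a i) (z i (jj i))}"
    by (auto simp: inner_diff_right)
  have Qi: "Q i = M i \<or> Q i = UNIV" using R_2a R_2b by blast
  have "Deps m f 0 \<subseteq> Dj f (jj i)" unfolding Deps0 using R_4(1) by auto
  then have "Deps m f 0 \<inter> D2 \<subseteq> {x. inner (a i) (x - z i (jj i)) \<le> 0}" using R_5(2) by blast
  moreover have "closed (Q i)" "convex (Q i)" using Qi Suc by auto
  ultimately show ?case unfolding R_5(3) hs using Qi Suc
    by (auto intro!: closed_Int convex_Int closed_halfspace_le convex_halfspace_le)
qed

lemma ys_cp: "ys i = closest_point (M i \<inter> D2) y"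
  by (cases i) (auto simp: R_init R_5(4))

lemma MD2: "closed (M i \<inter> D2)" "convex (M i \<inter> D2)" "M i \<inter> D2 \<noteq> {}"
  using M_props[of i] cD2 vD2 Dne by (auto intro: convex_Int)

lemma ys_in: "ys i \<in> M i \<inter> D2"
  unfolding ys_cp using closest_point_in_set[OF MD2(1) MD2(3)] .

lemma ys_le: "x \<in> Deps m f 0 \<inter> D2 \<Longrightarrow> dist y (ys i) \<le> dist y x"
proof -
  assume x: "x \<in> Deps m f 0 \<inter> D2"
  then have "x \<in> M i \<inter> D2" using M_props[of i] by blast
  then show ?thesis unfolding ys_cp by (rule closest_point_le[OF MD2(1)])
qed

lemma kk_step: "kk (Suc i) = kk i \<or> kk (Suc i) = Suc (kk i)"
  using R_2a R_2b by blast

lemma kk_mono: "i \<le> i' \<Longrightarrow> kk i \<le> kk i'"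
proof -
  assume h: "i \<le> i'"
  have "kk n \<le> kk (Suc n)" for n using kk_step[of n] by linarith
  then show ?thesis using lift_Suc_mono_le[of kk, OF _ h] by blast
qed


lemma approx_bound:
  "\<exists>C\<ge>0. \<forall>i j. j < m \<longrightarrow> (\<exists>w\<in>Dj f j. norm (w - ys i) \<le> C * norm (ys i - ys (Suc i)))"
proof -
  have "\<forall>j. \<exists>d. j < m \<longrightarrow> d > 0 \<and> ball (v j) d \<subseteq> Dj f j"
    using R_v mem_interior by blast
  then obtain \<delta> where \<delta>: "\<And>j. j < m \<Longrightarrow> \<delta> j > 0 \<and> ball (v j) (\<delta> j) \<subseteq> Dj f j"
    by metis
  obtain x0 where x0: "x0 \<in> Deps m f 0 \<inter> D2" using Dne by blast
  define \<rho> where "\<rho> = dist y x0"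
  define C0 where "C0 = (\<Sum>j<m. 2 * (\<rho> + norm (y - v j)) / \<delta> j)"
  have rho0: "\<rho> \<ge> 0" unfolding \<rho>_def by simp
  have C0pos: "C0 \<ge> 0" unfolding C0_def using \<delta> rho0
    by (intro sum_nonneg) (auto intro!: divide_nonneg_pos)
  have zb: "norm (ys i - z i (jj i)) \<le> C0 * norm (ys i - ys (Suc i))" for i
  proof -
    let ?J = "jj i" and ?w = "ys i" and ?zz = "z i (jj i)"
    have J: "?J < m" by (rule R_4(1))
    have seg: "?zz \<in> open_segment (v ?J) ?w" using R_3[OF J R_4(2)] by blast
    have cb: "\<delta> ?J * norm (?w - ?zz) \<le> 2 * norm (?w - v ?J) * inner (a i) (?w - ?zz)
              \<and> 0 \<le> inner (a i) (?w - ?zz)"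
      using cut_bound[OF R_5(1) _ _ _ seg, of "\<delta> ?J" "Dj f ?J"] \<delta>[OF J] R_5(2) by blast
    have "ys (Suc i) \<in> M (Suc i)" using ys_in by blast
    then have i1: "inner (a i) (ys (Suc i) - ?zz) \<le> 0" unfolding R_5(3) by blast
    have "inner (a i) (?w - ?zz) = inner (a i) (?w - ys (Suc i)) + inner (a i) (ys (Suc i) - ?zz)"
      by (simp add: inner_diff_right)
    also have "\<dots> \<le> norm (a i) * norm (?w - ys (Suc i))"
      using i1 norm_cauchy_schwarz[of "a i" "?w - ys (Suc i)"] by linarith
    finally have i2: "inner (a i) (?w - ?zz) \<le> norm (?w - ys (Suc i))" using R_5(1) by simp
    have "dist y ?w \<le> \<rho>" unfolding \<rho>_def using ys_le[OF x0] .
    then have nw: "norm (?w - v ?J) \<le> \<rho> + norm (y - v ?J)"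
      using norm_triangle_ineq[of "?w - y" "y - v ?J"] by (simp add: dist_norm norm_minus_commute)
    have dJ: "\<delta> ?J > 0" using \<delta>[OF J] by blast
    have "\<delta> ?J * norm (?w - ?zz) \<le> 2 * (\<rho> + norm (y - v ?J)) * norm (?w - ys (Suc i))"
    proof -
      have "2 * norm (?w - v ?J) * inner (a i) (?w - ?zz) \<le> 2 * (\<rho> + norm (y - v ?J)) * inner (a i) (?w - ?zz)"
        using nw cb by (intro mult_right_mono) auto
      also have "\<dots> \<le> 2 * (\<rho> + norm (y - v ?J)) * norm (?w - ys (Suc i))"
        using i2 rho0 by (intro mult_left_mono) auto
      finally show ?thesis using cb by linarith
    qed
    then have "norm (?w - ?zz) \<le> (2 * (\<rho> + norm (y - v ?J)) / \<delta> ?J) * norm (?w - ys (Suc i))"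
      using dJ by (simp add: field_simps)
    also have "\<dots> \<le> C0 * norm (?w - ys (Suc i))"
    proof (intro mult_right_mono)
      show "2 * (\<rho> + norm (y - v ?J)) / \<delta> ?J \<le> C0" unfolding C0_def
        using J \<delta> rho0 by (intro member_le_sum[of ?J "{..<m}" "\<lambda>j. 2 * (\<rho> + norm (y - v j)) / \<delta> j"])
          (auto intro!: divide_nonneg_pos)
    qed simp
    finally show ?thesis .
  qed
  show ?thesis
  proof (intro exI[of _ "q * C0"] conjI allI impI)
    show "0 \<le> q * C0" using C0pos R_eps(3) by simp
    fix i j assume j: "j < m"
    show "\<exists>w\<in>Dj f j. norm (w - ys i) \<le> q * C0 * norm (ys i - ys (Suc i))"
    proof (cases "ys i \<in> Dj f j")
      case True
      then show ?thesis using C0pos R_eps(3) by (intro bexI[of _ "ys i"]) auto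
    next
      case False
      obtain qq where qq: "1 \<le> qq" "qq \<le> q" "ys i + qq *\<^sub>R (z i j - ys i) \<in> Dj f j"
        using R_3[OF j False] by blast
      have "norm (ys i + qq *\<^sub>R (z i j - ys i) - ys i) = qq * norm (ys i - z i j)"
        using qq by (simp add: norm_minus_commute)
      also have "\<dots> \<le> q * norm (ys i - z i (jj i))"
        using qq R_4(3)[OF j False] by (intro mult_mono) auto
      also have "\<dots> \<le> q * (C0 * norm (ys i - ys (Suc i)))"
        using zb R_eps(3) by (intro mult_left_mono) auto
      finally show ?thesis using qq(3) by (intro bexI[of _ "ys i + qq *\<^sub>R (z i j - ys i)"]) auto
    qed
  qed
qed


lemma kk_unbounded: "\<exists>i. k \<le> kk i"
proof (rule ccontr)
  assume "\<not> ?thesis"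
  then have lt: "\<And>i. kk i < k" by (meson not_le)
  have "range kk \<subseteq> {..<k}" using lt by blast
  then have fin: "finite (range kk)" using finite_subset by blast
  define K where "K = Max (range kk)"
  have "K \<in> range kk" unfolding K_def using fin by (intro Max_in) auto
  then obtain i0 where i0: "kk i0 = K" by auto
  have kkK: "kk i = K" if "i0 \<le> i" for i
  proof -
    have "kk i \<in> range kk" by simp
    then have "kk i \<le> K" unfolding K_def using fin by (rule Max_ge[rotated])
    then show ?thesis using kk_mono[OF that] i0 by linarith
  qed
  have notin: "ys i \<notin> Deps m f (eps K)" if "i0 \<le> i" for i
  proof
    assume "ys i \<in> Deps m f (eps K)"
    then have "ys i \<in> Deps m f (eps (kk i))" using kkK[OF that] by simp
    then have "kk (Suc i) = Suc (kk i)" using R_2b[of i] by blast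
    moreover have "kk (Suc i) = K" using kkK[of "Suc i"] that by simp
    ultimately show False using kkK[OF that] by simp
  qed
  have Mdec: "M (Suc i) \<subseteq> M i" if "i0 \<le> i" for i
  proof -
    have "ys i \<notin> Deps m f (eps (kk i))" using notin[OF that] kkK[OF that] by simp
    then have "Q i = M i" using R_2a[of i] by blast
    then show ?thesis unfolding R_5(3) by blast
  qed
  have Mnest: "M n \<subseteq> M i" if "i0 \<le> i" "i \<le> n" for i n
    using that(2)
  proof (induction n rule: dec_induct)
    case base then show ?case by simp
  next
    case (step n) then show ?case using Mdec[of n] that(1) by auto
  qed
  have nest: "(norm (ys n - ys i))\<^sup>2 \<le> (norm (ys n - y))\<^sup>2 - (norm (ys i - y))\<^sup>2"
    if "i0 \<le> i" "i \<le> n" for i n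
    unfolding ys_cp[of n] ys_cp[of i]
  proof (rule nested_proj[OF MD2(2)[of i] MD2(1)[of i] _ MD2(1)[of n] MD2(3)[of n]])
    show "M n \<inter> D2 \<subseteq> M i \<inter> D2" using Mnest[OF that] by blast
  qed
  obtain x0 where x0: "x0 \<in> Deps m f 0 \<inter> D2" using Dne by blast
  define g where "g i = (norm (ys (i + i0) - y))\<^sup>2" for i
  have gmono: "g i \<le> g n" if "i \<le> n" for i n
  proof -
    have "(norm (ys (n + i0) - ys (i + i0)))\<^sup>2 \<le> g n - g i"
      using nest[of "i + i0" "n + i0"] that unfolding g_def by simp
    moreover have "0 \<le> (norm (ys (n + i0) - ys (i + i0)))\<^sup>2" by simp
    ultimately show ?thesis by linarith
  qed
  have gb: "norm (g i) \<le> (dist y x0)\<^sup>2" for i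
  proof -
    have "norm (ys (i + i0) - y) \<le> dist y x0" using ys_le[OF x0] by (simp add: dist_norm norm_minus_commute)
    then show ?thesis unfolding g_def by (simp add: power_mono)
  qed
  have "convergent g" by (rule Bseq_mono_convergent[OF BseqI'[OF gb]]) (use gmono in auto)
  then have Cg: "Cauchy g" by (rule convergent_Cauchy)
  define Y where "Y i = ys (i + i0)" for i
  have "Cauchy Y"
  proof (rule metric_CauchyI)
    fix e :: real assume e: "0 < e"
    then obtain N where N: "\<And>m n. N \<le> m \<Longrightarrow> N \<le> n \<Longrightarrow> dist (g m) (g n) < e\<^sup>2"
      using metric_CauchyD[OF Cg, of "e\<^sup>2"] by auto
    have key: "dist (Y m1) (Y n1) < e" if "N \<le> m1" "m1 \<le> n1" for m1 n1
    proof -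
      have "(norm (Y n1 - Y m1))\<^sup>2 \<le> g n1 - g m1"
        using nest[of "m1 + i0" "n1 + i0"] that unfolding Y_def g_def by simp
      also have "\<dots> < e\<^sup>2" using N[of n1 m1] that by (simp add: dist_real_def)
      finally have "norm (Y n1 - Y m1) < e" using e by (simp add: power_less_imp_less_base)
      then show ?thesis by (simp add: dist_norm norm_minus_commute)
    qed
    show "\<exists>M. \<forall>m\<ge>M. \<forall>n\<ge>M. dist (Y m) (Y n) < e"
    proof (intro exI allI impI)
      fix m1 n1 assume h: "N \<le> m1" "N \<le> n1"
      show "dist (Y m1) (Y n1) < e"
      proof (cases "m1 \<le> n1")
        case True then show ?thesis using key h by blast
      next
        case False then show ?thesis using key[of n1 m1] h by (simp add: dist_commute)
      qed
    qed
  qed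
  then obtain L where "Y \<longlonglongrightarrow> L" using Cauchy_convergent convergent_def by blast
  then have yL: "ys \<longlonglongrightarrow> L" unfolding Y_def by (rule LIMSEQ_offset)
  obtain C where C: "C \<ge> 0" "\<And>i j. j < m \<Longrightarrow> \<exists>w\<in>Dj f j. norm (w - ys i) \<le> C * norm (ys i - ys (Suc i))"
    using approx_bound by blast
  have "(\<lambda>i. C * norm (ys i - ys (Suc i))) \<longlonglongrightarrow> C * norm (L - L)"
    by (intro tendsto_intros yL LIMSEQ_Suc)
  then have d0: "(\<lambda>i. C * norm (ys i - ys (Suc i))) \<longlonglongrightarrow> 0" by simp
  have LD: "L \<in> Dj f j" if j: "j < m" for j
  proof -
    have "\<exists>w\<in>Dj f j. dist w L < e" if e: "e > 0" for e
    proof -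
      obtain N1 where N1: "\<And>n. n \<ge> N1 \<Longrightarrow> norm (ys n - L) < e/2"
        using yL e unfolding LIMSEQ_iff by (meson half_gt_zero)
      obtain N2 where N2: "\<And>n. n \<ge> N2 \<Longrightarrow> norm (C * norm (ys n - ys (Suc n)) - 0) < e/2"
        using d0 e unfolding LIMSEQ_iff by (meson half_gt_zero)
      let ?n = "max N1 N2"
      obtain w where w: "w \<in> Dj f j" "norm (w - ys ?n) \<le> C * norm (ys ?n - ys (Suc ?n))"
        using C(2)[OF j] by blast
      have "C * norm (ys ?n - ys (Suc ?n)) < e/2" using N2[of ?n] by simp
      moreover have "norm (ys ?n - L) < e/2" using N1[of ?n] by simp
      moreover have "dist w L \<le> norm (w - ys ?n) + norm (ys ?n - L)"
        using norm_triangle_ineq[of "w - ys ?n" "ys ?n - L"] by (simp add: dist_norm)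
      ultimately show ?thesis using w by (intro bexI[of _ w]) auto
    qed
    then show ?thesis using closed_approachable[OF closed_Dj[OF j]] by blast
  qed
  have ev: "eventually (\<lambda>i. f j (ys i) < eps K) sequentially" if j: "j < m" for j
  proof -
    have "isCont (f j) L"
      using contf[OF j] continuous_on_eq_continuous_at[OF open_UNIV] by blast
    then have "(\<lambda>i. f j (ys i)) \<longlonglongrightarrow> f j L" using yL by (rule isCont_tendsto_compose)
    moreover have "f j L < eps K" using LD[OF j] R_eps(1)[of K] unfolding Dj_def by auto
    ultimately show ?thesis by (rule order_tendstoD(2))
  qed
  have "eventually (\<lambda>i. \<forall>j\<in>{..<m}. f j (ys i) < eps K) sequentially"
    using ev by (intro eventually_ball_finite) auto
  then obtain N where N: "\<And>i. i \<ge> N \<Longrightarrow> \<forall>j\<in>{..<m}. f j (ys i) < eps K"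
    unfolding eventually_sequentially by blast
  have "ys (max N i0) \<in> Deps m f (eps K)"
    using N[of "max N i0"] unfolding Deps_def by (auto intro: less_imp_le)
  then show False using notin[of "max N i0"] by simp
qed

lemma kk_hit: "\<exists>i. kk i = k \<and> kk (Suc i) = Suc k"
proof -
  obtain i1 where i1: "Suc k \<le> kk i1" using kk_unbounded by blast
  define i where "i = (LEAST i. Suc k \<le> kk i)"
  have hi: "Suc k \<le> kk i" unfolding i_def using i1 by (rule LeastI)
  have "i \<noteq> 0"
  proof
    assume "i = 0" then show False using hi R_init(1) by simp
  qed
  then obtain i' where i': "i = Suc i'" using not0_implies_Suc by blast
  have "i' < i" using i' by simp
  then have nle: "\<not> Suc k \<le> kk i'" unfolding i_def by (rule not_less_Least)
  have st: "kk (Suc i') = Suc (kk i')"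
    using kk_step[of i'] hi i' nle by auto
  then have "kk i' = k" using hi i' nle by simp
  then show ?thesis using st by blast
qed


lemma p_props: "method13_p ys kk k \<in> Deps m f (eps k) \<inter> D2"
proof -
  define i where "i = (LEAST i. kk i = k \<and> kk (Suc i) = Suc k)"
  have Pi: "kk i = k \<and> kk (Suc i) = Suc k" unfolding i_def using kk_hit by (rule LeastI_ex)
  have p: "method13_p ys kk k = ys i" unfolding method13_p_def i_def ..
  have "ys i \<in> Deps m f (eps (kk i))"
  proof (rule ccontr)
    assume "ys i \<notin> Deps m f (eps (kk i))"
    then have "kk (Suc i) = kk i" using R_2a[of i] by blast
    then show False using Pi by simp
  qed
  then show ?thesis using p Pi ys_in[of i] by simp
qed

lemma p_le: "x \<in> Deps m f 0 \<inter> D2 \<Longrightarrow> dist y (method13_p ys kk k) \<le> dist y x"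
  unfolding method13_p_def by (rule ys_le)

lemma part1:
  assumes r: "strict_mono r" and lim: "(\<lambda>k. method13_p ys kk (r k)) \<longlonglongrightarrow> l"
  shows "l = closest_point (Deps m f 0 \<inter> D2) y"
proof -
  have "eventually (\<lambda>k. method13_p ys kk (r k) \<in> D2) sequentially"
    using p_props by (intro always_eventually) blast
  then have lD2: "l \<in> D2" using Lim_in_closed_set[OF cD2 _ trivial_limit_sequentially lim] by blast
  have fl: "f j l \<le> 0" if j: "j < m" for j
  proof -
    have "isCont (f j) l"
      using contf[OF j] continuous_on_eq_continuous_at[OF open_UNIV] by blast
    then have l1: "(\<lambda>k. f j (method13_p ys kk (r k))) \<longlonglongrightarrow> f j l"
      using lim by (rule isCont_tendsto_compose)
    have l2: "(\<lambda>k. eps (r k)) \<longlonglongrightarrow> 0"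
      using LIMSEQ_subseq_LIMSEQ[OF R_eps(2) r] by (simp add: o_def)
    have "\<forall>n. f j (method13_p ys kk (r n)) \<le> eps (r n)"
      using p_props j unfolding Deps_def by blast
    then show ?thesis using LIMSEQ_le[OF l1 l2] by blast
  qed
  have lDD: "l \<in> Deps m f 0 \<inter> D2" using fl lD2 unfolding Deps_def by blast
  have "\<forall>x\<in>Deps m f 0 \<inter> D2. dist y l \<le> dist y x"
  proof
    fix x assume x: "x \<in> Deps m f 0 \<inter> D2"
    have "(\<lambda>k. dist y (method13_p ys kk (r k))) \<longlonglongrightarrow> dist y l"
      by (intro tendsto_dist tendsto_const lim)
    then show "dist y l \<le> dist y x" using p_le[OF x] by (intro LIMSEQ_le_const2) auto
  qed
  then show ?thesis using closest_point_unique[OF convex_DD closed_DD lDD] by blast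
qed

lemma part2: "method13_p ys kk \<longlonglongrightarrow> closest_point (Deps m f 0 \<inter> D2) y"
proof (rule ccontr)
  let ?P = "closest_point (Deps m f 0 \<inter> D2) y" and ?p = "method13_p ys kk"
  assume "\<not> ?p \<longlonglongrightarrow> ?P"
  then obtain e where e: "e > 0" "\<not> eventually (\<lambda>k. dist (?p k) ?P < e) sequentially"
    unfolding tendsto_iff by blast
  from not_eventually_sequentiallyD[OF e(2)] obtain r :: "nat \<Rightarrow> nat" where r: "strict_mono r" "\<forall>n. \<not> dist (?p (r n)) ?P < e"
    by blast
  obtain x0 where x0: "x0 \<in> Deps m f 0 \<inter> D2" using Dne by blast
  have "range (?p \<circ> r) \<subseteq> cball y (dist y x0)" using p_le[OF x0] by auto
  then have "bounded (range (?p \<circ> r))" using bounded_subset[OF bounded_cball] by blast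
  then obtain l s where s: "strict_mono s" "((?p \<circ> r) \<circ> s) \<longlonglongrightarrow> l"
    using bounded_imp_convergent_subsequence by blast
  have rs: "strict_mono (r \<circ> s)" using strict_mono_o[OF r(1) s(1)] .
  have lim: "(\<lambda>k. ?p ((r \<circ> s) k)) \<longlonglongrightarrow> l" using s(2) by (simp add: o_def)
  have "l = ?P" by (rule part1[OF rs lim])
  then have "eventually (\<lambda>k. dist (?p ((r \<circ> s) k)) ?P < e) sequentially"
    using tendstoD[OF lim e(1)] by simp
  then obtain N where "\<forall>n\<ge>N. dist (?p ((r \<circ> s) n)) ?P < e"
    unfolding eventually_sequentially by blast
  then have "dist (?p (r (s N))) ?P < e" by simp
  then show False using r(2)[rule_format, of "s N"] by simp
qed

end

theorem theorem1p3p1: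
  fixes f :: "nat \<Rightarrow> 'a::euclidean_space \<Rightarrow> real"
    and D2 :: "'a set" and y :: 'a
  assumes "closed D2" and "convex D2"
    and "\<forall>j<m. convex_on UNIV (f j)"
    and "\<forall>j<m. interior (Dj f j) \<noteq> {}"
    and "Deps m f 0 \<inter> D2 \<noteq> {}"
    and "method13_run m f D2 y v eps q ys M Q z jj a kk"
  shows "(\<forall>l r. strict_mono r \<and> ((\<lambda>k. method13_p ys kk (r k)) \<longlonglongrightarrow> l)
            \<longrightarrow> l = closest_point (Deps m f 0 \<inter> D2) y)
      \<and> ((\<forall>k. norm (method13_p ys kk (Suc k) - y) \<ge> norm (method13_p ys kk k - y))
            \<longrightarrow> (method13_p ys kk \<longlonglongrightarrow> closest_point (Deps m f 0 \<inter> D2) y))"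
  using part1[OF assms] part2[OF assms] by blast

end
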